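(* Let $\mathbf{v}_1,\dots,\mathbf{v}_n\in\mathbb{R}^d$, not all zero, let $V=[\mathbf{v}_1,\dots,\mathbf{v}_n]\in\mathbb{R}^{d\times n}$ and $A=V^TV$. Let $0<\epsilon\le1$ and let $\underline{N}^{\epsilon}$ be the least dimension of a linear subspace $S\subseteq\mathbb{R}^d$ such that $\frac{\sum_{i=1}^n\|\mathbf{v}_i-P_S\mathbf{v}_i\|_2^2}{\sum_{i=1}^n\|\mathbf{v}_i\|_2^2}\le\epsilon^2$, where $P_S$ is the orthogonal projection onto $S$. Then $$\underline{N}^{\epsilon}\ge\frac{\left(\sum_{i=1}^n\|\mathbf{v}_i\|_2^2\right)^2(1-\epsilon^2)^2}{\sum_{i,j=1}^n(\mathbf{v}_i\cdot\mathbf{v}_j)^2}=\frac{\operatorname{tr}(A)^2(1-\epsilon^2)^2}{\|A\|_F^2}.$$ *)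

theory Defs
  imports "HOL-Analysis.Analysis"
begin

definition orth_proj :: "'a::euclidean_space set \<Rightarrow> 'a \<Rightarrow> 'a" where
  "orth_proj S x = (THE p. p \<in> S \<and> (\<forall>y\<in>S. inner (x - p) y = 0))"

definition min_dim_eps :: "real \<Rightarrow> nat \<Rightarrow> (nat \<Rightarrow> 'a::euclidean_space) \<Rightarrow> nat" where
  "min_dim_eps eps n v = (LEAST k. \<exists>S. subspace S \<and> dim S = k \<and>
      (\<Sum>i<n. (norm (v i - orth_proj S (v i)))^2) / (\<Sum>i<n. (norm (v i))^2) \<le> eps^2)"

end

theory Submission
  imports Defs
begin

definition outer :: "real^'n \<Rightarrow> real^'n \<Rightarrow> real^'n^'n" where
  "outer x y = (\<chi> a. \<chi> b. x$a * y$b)"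

lemma inner_outer: "inner (outer a b) (outer c d) = inner a c * inner b d"
  unfolding outer_def inner_vec_def
  apply (simp add: sum_product sum_distrib_left)
  apply (subst sum.swap)
  apply (rule sum.cong[OF refl])+
  apply (simp add: sum_distrib_left mult_ac)
  done

lemma orth_proj_eq:
  assumes S: "subspace S" and p: "p \<in> S" and o: "\<forall>y\<in>S. inner (x - p) y = 0"
  shows "orth_proj S x = p"
  unfolding orth_proj_def
proof (rule the_equality)
  show "p \<in> S \<and> (\<forall>y\<in>S. inner (x - p) y = 0)" using p o by blast
next
  fix q assume q: "q \<in> S \<and> (\<forall>y\<in>S. inner (x - q) y = 0)"
  have "q - p \<in> S" using q p S by (simp add: subspace_diff)
  hence "inner (x - p) (q - p) = 0" "inner (x - q) (q - p) = 0" using o q by auto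
  hence "inner (q - p) (q - p) = 0" by (simp add: inner_diff_left inner_diff_right)
  thus "q = p" by simp
qed

lemma orth_basis:
  fixes B :: "'a::euclidean_space set"
  assumes fin: "finite B" and po: "pairwise orthogonal B" and nb: "\<And>u. u \<in> B \<Longrightarrow> norm u = 1"
    and u: "u \<in> B"
  shows "inner (x - (\<Sum>w\<in>B. inner w x *\<^sub>R w)) u = 0"
proof -
  have "(\<Sum>w\<in>B. inner w x * inner w u) = inner u x * inner u u"
    apply (subst sum.remove[OF fin u])
    apply (subst sum.neutral) 
    using po u by (auto simp: pairwise_def orthogonal_def)
  moreover have "inner u u = 1" using nb[OF u] by (simp add: norm_eq_1)
  moreover have "inner (x - (\<Sum>w\<in>B. inner w x *\<^sub>R w)) u = inner x u - (\<Sum>w\<in>B. inner w x * inner w u)"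
    by (simp add: inner_diff_left inner_sum_left)
  ultimately show ?thesis
    by (simp add: inner_commute)
qed

lemma proj_basis:
  fixes B :: "'a::euclidean_space set"
  assumes fin: "finite B" and po: "pairwise orthogonal B" and nb: "\<And>u. u \<in> B \<Longrightarrow> norm u = 1"
  shows "orth_proj (span B) x = (\<Sum>w\<in>B. inner w x *\<^sub>R w)"
proof (rule orth_proj_eq)
  show "subspace (span B)" by simp
  show "(\<Sum>w\<in>B. inner w x *\<^sub>R w) \<in> span B"
    by (simp add: span_base span_scale span_sum)
  have "orthogonal (x - (\<Sum>w\<in>B. inner w x *\<^sub>R w)) u" if u: "u \<in> B" for u
    using orth_basis[OF assms u] by (simp add: orthogonal_def)
  then show "\<forall>y\<in>span B. inner (x - (\<Sum>w\<in>B. inner w x *\<^sub>R w)) y = 0"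
    using orthogonal_to_span unfolding orthogonal_def by blast
qed

lemma err_basis:
  fixes B :: "'a::euclidean_space set"
  assumes fin: "finite B" and po: "pairwise orthogonal B" and nb: "\<And>u. u \<in> B \<Longrightarrow> norm u = 1"
  shows "(norm (x - orth_proj (span B) x))^2 = (norm x)^2 - (\<Sum>w\<in>B. (inner w x)^2)"
proof -
  define p where "p = (\<Sum>w\<in>B. inner w x *\<^sub>R w)"
  have pe: "orth_proj (span B) x = p" using proj_basis[OF assms] p_def by simp
  have "inner (x - p) p = (\<Sum>w\<in>B. inner w x * inner (x - p) w)"
    unfolding p_def by (simp add: inner_sum_right)
  also have "\<dots> = 0" using orth_basis[OF assms] p_def by simp
  finally have h0: "inner (x - p) p = 0" .
  have h1: "inner p x = (\<Sum>w\<in>B. (inner w x)^2)"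
    unfolding p_def by (simp add: inner_sum_left power2_eq_square)
  have "(norm (x - p))^2 = inner (x - p) x - inner (x - p) p"
    by (simp add: power2_norm_eq_inner inner_diff_right)
  also have "\<dots> = (norm x)^2 - (\<Sum>w\<in>B. (inner w x)^2)"
    using h0 h1 by (simp add: inner_diff_left power2_norm_eq_inner)
  finally show ?thesis using pe by simp
qed

lemma orth_proj_UNIV: "orth_proj UNIV x = x"
  by (rule orth_proj_eq) auto

theorem mainTheorem5:
  fixes n :: nat and v :: "nat \<Rightarrow> real ^ 'd" and eps :: real
  assumes "\<exists>i<n. v i \<noteq> 0"
    and "0 < eps" and "eps \<le> 1"
  shows "real (min_dim_eps eps n v) \<ge>
    (\<Sum>i<n. (norm (v i))^2)^2 * (1 - eps^2)^2 / (\<Sum>i<n. \<Sum>j<n. (inner (v i) (v j))^2)"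
proof -
  define T where "T = (\<Sum>i<n. (norm (v i))^2)"
  define F where "F = (\<Sum>i<n. \<Sum>j<n. (inner (v i) (v j))^2)"
  obtain i0 where i0: "i0 < n" "v i0 \<noteq> 0" using assms(1) by blast
  have Tpos: "T > 0" unfolding T_def
    using i0 by (intro sum_pos2[of "{..<n}" i0]) auto
  have "F \<ge> (\<Sum>i<n. (inner (v i) (v i))^2)" unfolding F_def
    by (rule sum_mono, rule member_le_sum) auto
  moreover have "(\<Sum>i<n. (inner (v i) (v i))^2) > 0"
    using i0 by (intro sum_pos2[of "{..<n}" i0]) auto
  ultimately have Fpos: "F > 0" by linarith
  let ?P = "\<lambda>k. \<exists>S. subspace S \<and> dim S = k \<and>
      (\<Sum>i<n. (norm (v i - orth_proj S (v i)))^2) / (\<Sum>i<n. (norm (v i))^2) \<le> eps^2"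
  have "?P (dim (UNIV :: (real^'d) set))"
    by (rule exI[of _ UNIV]) (simp add: orth_proj_UNIV)
  hence "?P (min_dim_eps eps n v)" unfolding min_dim_eps_def by (rule LeastI)
  then obtain S where S: "subspace S" "dim S = min_dim_eps eps n v"
    "(\<Sum>i<n. (norm (v i - orth_proj S (v i)))^2) / T \<le> eps^2"
    unfolding T_def by blast
  obtain B where B: "B \<subseteq> S" "pairwise orthogonal B" "\<And>x. x \<in> B \<Longrightarrow> norm x = 1"
    "independent B" "card B = dim S" "span B = S"
    using orthonormal_basis_subspace[OF S(1)] by blast
  have fin: "finite B" using B(4) independent_bound by blast
  define k where "k = min_dim_eps eps n v"
  define Q where "Q = (\<Sum>i<n. \<Sum>w\<in>B. (inner w (v i))^2)"
  have err: "(\<Sum>i<n. (norm (v i - orth_proj S (v i)))^2) = T - Q"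
    unfolding T_def Q_def using err_basis[OF fin B(2) B(3)] B(6)
    by (simp add: sum_subtractf)
  have "T - Q \<le> eps^2 * T" using S(3) err Tpos by (simp add: divide_le_eq)
  hence Qge: "(1 - eps^2) * T \<le> Q" by (simp add: algebra_simps)
  have e1: "0 \<le> 1 - eps^2" using assms(2,3)
    by (simp add: power_le_one)
  define Pm where "Pm = (\<Sum>w\<in>B. outer w w)"
  define G where "G = (\<Sum>i<n. outer (v i) (v i))"
  have "inner Pm G = Q" unfolding Pm_def G_def Q_def
    by (simp add: inner_sum_left inner_sum_right inner_outer power2_eq_square sum.swap[of _ B])
  have "inner G G = F" unfolding G_def F_def
    by (simp add: inner_sum_left inner_sum_right inner_outer power2_eq_square, subst sum.swap, simp)
  have "inner Pm Pm = (\<Sum>u\<in>B. \<Sum>w\<in>B. (if u = w then 1 else 0))" unfolding Pm_def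
    apply (simp add: inner_sum_left inner_sum_right inner_outer)
    apply (rule sum.cong[OF refl])+
    using B(2,3) by (auto simp: pairwise_def orthogonal_def norm_eq_1)
  also have "\<dots> = real k" using fin B(5) S(2) k_def by simp
  finally have PP: "inner Pm Pm = real k" .
  have "Q \<le> norm Pm * norm G" using \<open>inner Pm G = Q\<close> norm_cauchy_schwarz by metis
  hence "Q^2 \<le> (norm Pm)^2 * (norm G)^2"
    using Qge e1 Tpos by (metis power_mono power_mult_distrib mult_nonneg_nonneg order.trans less_imp_le)
  hence "Q^2 \<le> real k * F" using PP \<open>inner G G = F\<close> by (simp add: power2_norm_eq_inner)
  moreover have "((1 - eps^2) * T)^2 \<le> Q^2" using Qge e1 Tpos by (simp add: power_mono)
  ultimately have "T^2 * (1 - eps^2)^2 \<le> real k * F" by (simp add: power_mult_distrib mult_ac)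
  hence "T^2 * (1 - eps^2)^2 / F \<le> real k" using Fpos by (simp add: divide_le_eq)
  thus ?thesis unfolding T_def F_def k_def .
qed

end
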